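(* Let $X$ be a non-negative random variable with absolutely continuous distribution function $F$, survival function $\bar F$, and mean residual life function $m_1(t)=E(X-t\mid X>t)$. Let $G$ be the proportional hazards model of $F$, i.e. $\bar G(x)=(\bar F(x))^\theta$ for some $\theta>0$, and let $\alpha,\beta>0$. Define $$R_{\alpha,\beta}(\bar F,t)=\int_t^\infty\left(\frac{\bar F(x)}{\bar F(t)}\right)^{\alpha+\beta\theta}dx .$$ Then the relationship $R_{\alpha,\beta}(\bar F,t)=k\,m_1(t)$ for all $t>0$, with $k$ a constant, holds if and only if $X$ has a generalized Pareto distribution, i.e. survival function $\bar F(x)=\left(1+\frac{b}{a}x\right)^{-\left(1+\frac1b\right)}$, $x>0$, $b>-1$, $a>0$.
   Context: $R_{\alpha,\beta}(\bar F,t)$ is the dynamic relative cumulative residual information measure $\int_t^\infty (\bar F(x)/\bar F(t))^\alpha(\bar G(x)/\bar G(t))^\beta dx$ under the proportional hazards model $\bar G=\bar F^\theta$.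
   Formalization: The exponent $\alpha+\beta\theta$ must differ from 1, $\bar F(x)^{\alpha+\beta\theta}$ is integrable over [0, infinity), and the generalized Pareto family includes b = 0 as exp(-x/a), with 1+(b/a)x replaced by max(0, 1+(b/a)x). The statement above fails without it. *)

theory Defs
  imports "HOL-Probability.Probability"
begin

definition survival :: "'a measure \<Rightarrow> ('a \<Rightarrow> real) \<Rightarrow> real \<Rightarrow> real" where
  "survival M X x = measure M {\<omega> \<in> space M. x < X \<omega>}"

definition mean_residual_life :: "'a measure \<Rightarrow> ('a \<Rightarrow> real) \<Rightarrow> real \<Rightarrow> real" where
  "mean_residual_life M X t =
     (LINT \<omega>:{\<omega> \<in> space M. t < X \<omega>}|M. X \<omega> - t) / survival M X t"

definition R_ph :: "real \<Rightarrow> real \<Rightarrow> real \<Rightarrow> (real \<Rightarrow> real) \<Rightarrow> real \<Rightarrow> real" where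
  "R_ph \<alpha> \<beta> \<theta> Fbar t = (LBINT x:{t..}. (Fbar x / Fbar t) powr (\<alpha> + \<beta> * \<theta>))"

text \<open>Survival function of the generalized Pareto distribution
  Fbar(x) = (1 + (b/a) x) powr (-(1 + 1/b)), truncated at 0 (bounded support when b < 0);
  the case b = 0 is the usual limiting member, the exponential law with mean a.\<close>
definition gen_pareto_surv :: "real \<Rightarrow> real \<Rightarrow> real \<Rightarrow> real" where
  "gen_pareto_surv a b x =
     (if b = 0 then exp (- x / a) else (max 0 (1 + (b / a) * x)) powr (- (1 + 1 / b)))"

end

theory Submission
  imports Defs
begin

locale srv =
  fixes M :: "'a measure" and X :: "'a \<Rightarrow> real"
  assumes ps: "prob_space M"
    and Xm[measurable]: "X \<in> borel_measurable M"
    and Xnn: "AE \<omega> in M. 0 \<le> X \<omega>"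
    and ac: "absolutely_continuous lborel (distr M lborel X)"
    and Xint: "integrable M X"
begin

interpretation P: prob_space M by (rule ps)

abbreviation "u \<equiv> survival M X"

lemma sets_gt[measurable]: "{\<omega> \<in> space M. x < X \<omega>} \<in> sets M"
  by measurable

lemma u_nonneg: "0 \<le> u x"
  by (simp add: survival_def)

lemma u_le1: "u x \<le> 1"
  by (simp add: survival_def)

lemma u_antimono: "x \<le> y \<Longrightarrow> u y \<le> u x"
  unfolding survival_def
  by (intro P.finite_measure_mono) auto

lemma atom: "measure M {\<omega> \<in> space M. X \<omega> = x} = 0"
proof -
  have "{x} \<in> null_sets lborel" by (simp add: finite_imp_null_set_lborel)
  with ac have "{x} \<in> null_sets (distr M lborel X)"
    unfolding absolutely_continuous_def by auto
  then have "emeasure (distr M lborel X) {x} = 0" by auto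
  then have "emeasure M (X -` {x} \<inter> space M) = 0"
    by (subst (asm) emeasure_distr) auto
  moreover have "X -` {x} \<inter> space M = {\<omega> \<in> space M. X \<omega> = x}" by auto
  ultimately show ?thesis by (simp add: measure_def)
qed

abbreviation "D \<equiv> distr M borel X"

lemma rd: "real_distribution D"
  by (rule P.real_distribution_distr) simp

lemma u_cdf: "u x = 1 - cdf D x"
proof -
  have "cdf D x = measure M (X -` {..x} \<inter> space M)"
    unfolding cdf_def by (subst measure_distr) auto
  moreover have "{\<omega> \<in> space M. x < X \<omega>} = space M - (X -` {..x} \<inter> space M)" by auto
  ultimately show ?thesis unfolding survival_def
    by (simp add: P.prob_compl)
qed

lemma u_isCont: "isCont u x"
proof -
  interpret R: real_distribution D by (rule rd)
  have "measure D {x} = measure M (X -` {x} \<inter> space M)"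
    by (subst measure_distr) auto
  also have "X -` {x} \<inter> space M = {\<omega> \<in> space M. X \<omega> = x}" by auto
  finally have "measure D {x} = 0" using atom by simp
  then have "isCont (cdf D) x" using R.isCont_cdf by simp
  then have "isCont (\<lambda>x. 1 - cdf D x) x" by (intro continuous_intros)
  moreover have "u = (\<lambda>x. 1 - cdf D x)" using u_cdf by (intro ext)
  ultimately show ?thesis by simp
qed

lemma u_cont: "continuous_on A u"
  by (simp add: continuous_at_imp_continuous_on u_isCont)

lemma u_meas[measurable]: "u \<in> borel_measurable borel"
proof -
  interpret R: real_distribution D by (rule rd)
  have "mono (cdf D)" by (simp add: R.cdf_nondecreasing monoI)
  then have "cdf D \<in> borel_measurable borel" by (rule borel_measurable_mono)
  then have "(\<lambda>x. 1 - cdf D x) \<in> borel_measurable borel" by measurable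
  moreover have "u = (\<lambda>x. 1 - cdf D x)" using u_cdf by (intro ext)
  ultimately show ?thesis by simp
qed

lemma u_le0: assumes "x \<le> 0" shows "u x = 1"
proof -
  have "AE \<omega> in M. X \<omega> \<noteq> 0"
    using atom[of 0] P.prob_Collect_eq_0[of "\<lambda>\<omega>. X \<omega> = 0"] by simp
  then have "AE \<omega> in M. 0 < X \<omega>" using Xnn by eventually_elim auto
  then have "u 0 = 1" unfolding survival_def
    by (subst P.prob_Collect_eq_1) auto
  then show ?thesis using u_antimono[OF assms] u_le1[of x] by simp
qed

abbreviation "T t \<equiv> (LINT \<omega>:{\<omega> \<in> space M. t < X \<omega>}|M. X \<omega> - t)"

lemma Tint: "integrable M (\<lambda>\<omega>. indicator {\<omega> \<in> space M. t < X \<omega>} \<omega> *\<^sub>R (X \<omega> - t))"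
proof -
  have "integrable M (\<lambda>\<omega>. X \<omega> - t)" using Xint by auto
  then show ?thesis by (intro integrable_mult_indicator) auto
qed

lemma T_nonneg: "0 \<le> T t"
  unfolding set_lebesgue_integral_def
  by (intro integral_nonneg_AE) (auto simp: indicator_def)

lemma layer_nn:
  "(\<integral>\<^sup>+x. ennreal (indicator {t..} x * u x) \<partial>lborel) = ennreal (T t)"
proof -
  interpret PS: pair_sigma_finite M lborel
    by (intro pair_sigma_finite.intro P.sigma_finite_measure_axioms lborel.sigma_finite_measure_axioms)
  define f where "f = (\<lambda>\<omega> x. ennreal (indicator {t..} x * indicator {\<omega> \<in> space M. x < X \<omega>} \<omega>))"
  have fm: "case_prod f \<in> borel_measurable (M \<Otimes>\<^sub>M lborel)"
  proof -
    have "case_prod f = (\<lambda>p. if fst p \<in> space M \<and> t \<le> snd p \<and> snd p < X (fst p) then 1 else 0)"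
      unfolding f_def by (auto simp: indicator_def fun_eq_iff)
    also have "\<dots> \<in> borel_measurable (M \<Otimes>\<^sub>M lborel)" by measurable
    finally show ?thesis .
  qed
  have "(\<integral>\<^sup>+x. ennreal (indicator {t..} x * u x) \<partial>lborel) = (\<integral>\<^sup>+ x. (\<integral>\<^sup>+ \<omega>. f \<omega> x \<partial>M) \<partial>lborel)"
  proof (intro nn_integral_cong)
    fix x
    have "(\<integral>\<^sup>+ \<omega>. f \<omega> x \<partial>M) = (\<integral>\<^sup>+ \<omega>. ennreal (indicator {t..} x) * indicator {\<omega> \<in> space M. x < X \<omega>} \<omega> \<partial>M)"
      unfolding f_def by (intro nn_integral_cong) (auto simp: indicator_def)
    also have "\<dots> = ennreal (indicator {t..} x) * emeasure M {\<omega> \<in> space M. x < X \<omega>}"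
      by (subst nn_integral_cmult_indicator) auto
    also have "\<dots> = ennreal (indicator {t..} x * u x)"
      unfolding survival_def by (simp add: P.emeasure_eq_measure ennreal_mult)
    finally show "ennreal (indicator {t..} x * u x) = (\<integral>\<^sup>+ \<omega>. f \<omega> x \<partial>M)" by simp
  qed
  also have "\<dots> = (\<integral>\<^sup>+ \<omega>. (\<integral>\<^sup>+ x. f \<omega> x \<partial>lborel) \<partial>M)"
    by (rule PS.Fubini'[OF fm])
  also have "\<dots> = (\<integral>\<^sup>+ \<omega>. ennreal (indicator {\<omega> \<in> space M. t < X \<omega>} \<omega> *\<^sub>R (X \<omega> - t)) \<partial>M)"
  proof (intro nn_integral_cong)
    fix \<omega> assume "\<omega> \<in> space M"
    have "(\<integral>\<^sup>+ x. f \<omega> x \<partial>lborel) = (\<integral>\<^sup>+ x. indicator {t..<X \<omega>} x \<partial>lborel)"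
      unfolding f_def using \<open>\<omega> \<in> space M\<close> by (intro nn_integral_cong) (auto simp: indicator_def)
    also have "\<dots> = emeasure lborel {t..<X \<omega>}" by simp
    also have "\<dots> = ennreal (indicator {\<omega> \<in> space M. t < X \<omega>} \<omega> *\<^sub>R (X \<omega> - t))"
      using \<open>\<omega> \<in> space M\<close> by (cases "t < X \<omega>") (auto simp: indicator_def)
    finally show "(\<integral>\<^sup>+ x. f \<omega> x \<partial>lborel) = ennreal (indicator {\<omega> \<in> space M. t < X \<omega>} \<omega> *\<^sub>R (X \<omega> - t))" .
  qed
  also have "\<dots> = ennreal (T t)"
    unfolding set_lebesgue_integral_def
    by (rule nn_integral_eq_integral[OF Tint]) (auto simp: indicator_def)
  finally show ?thesis .
qed

lemma layer_int: "set_integrable lborel {t..} u"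
  unfolding set_integrable_def
  by (rule integrableI_nonneg) (auto simp: u_nonneg layer_nn)

lemma layer: "T t = (LBINT x:{t..}. u x)"
proof -
  have "ennreal (LBINT x:{t..}. u x) = (\<integral>\<^sup>+x. ennreal (indicator {t..} x * u x) \<partial>lborel)"
    unfolding set_lebesgue_integral_def using layer_int[of t] unfolding set_integrable_def
    by (subst nn_integral_eq_integral) (auto simp: u_nonneg)
  then have "ennreal (LBINT x:{t..}. u x) = ennreal (T t)" using layer_nn by simp
  moreover have "0 \<le> (LBINT x:{t..}. u x)" unfolding set_lebesgue_integral_def
    by (intro integral_nonneg_AE) (auto simp: u_nonneg)
  ultimately show ?thesis using T_nonneg by simp
qed

lemma T_pos: assumes "0 < u t" shows "0 < T t"
proof (rule ccontr)
  assume "\<not> 0 < T t"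
  then have "T t = 0" using T_nonneg[of t] by simp
  then have "AE \<omega> in M. indicator {\<omega> \<in> space M. t < X \<omega>} \<omega> *\<^sub>R (X \<omega> - t) = 0"
    unfolding set_lebesgue_integral_def
    by (subst (asm) integral_nonneg_eq_0_iff_AE[OF Tint]) (auto simp: indicator_def)
  from this AE_space have "AE \<omega> in M. \<not> t < X \<omega>"
    by eventually_elim (auto simp: indicator_def)
  then have "u t = 0" unfolding survival_def
    by (subst P.prob_Collect_eq_0) auto
  then show False using assms by simp
qed

end

lemma tail_split:
  fixes g :: "real \<Rightarrow> real"
  assumes gm[measurable]: "g \<in> borel_measurable borel" and int: "set_integrable lborel {a..} g" and "a \<le> t"
  shows "set_integrable lborel {t..} g"
    "(LBINT x:{t..}. g x) = (LBINT x:{a..}. g x) - integral {a..t} g"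
proof -
  show i1: "set_integrable lborel {t..} g"
    by (rule set_integrable_subset[OF int]) (use assms in auto)
  have i2: "set_integrable lborel {a..<t} g"
    by (rule set_integrable_subset[OF int]) (use assms in auto)
  have i3: "set_integrable lborel {a..t} g"
    by (rule set_integrable_subset[OF int]) (use assms in auto)
  have eq: "{a..} = {a..<t} \<union> {t..}" using assms by auto
  have "{a..<t} \<inter> {t..} = {}" by auto
  note un = set_integral_Un[OF this i2 i1]
  have "(LBINT x:{a..}. g x) = (LBINT x:{a..<t}. g x) + (LBINT x:{t..}. g x)"
    by (subst eq) (rule un)
  moreover have "(LBINT x:{a..<t}. g x) = (LBINT x:{a..t}. g x)"
  proof -
    have "AE x in lborel. indicator {a..<t} x *\<^sub>R g x = indicator {a..t} x *\<^sub>R g x"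
      using AE_lborel_singleton[of t] by eventually_elim (auto simp: indicator_def)
    then show ?thesis unfolding set_lebesgue_integral_def
      by (rule integral_cong_AE[rotated 2]) measurable
  qed
  moreover have "(LBINT x:{a..t}. g x) = integral {a..t} g"
    by (rule set_borel_integral_eq_integral[OF i3])
  ultimately show "(LBINT x:{t..}. g x) = (LBINT x:{a..}. g x) - integral {a..t} g" by simp
qed

lemma tail_deriv:
  fixes g :: "real \<Rightarrow> real"
  assumes gc: "continuous_on UNIV g" and int: "set_integrable lborel {a..} g" and "a < t"
  shows "((\<lambda>s. LBINT x:{s..}. g x) has_real_derivative - g t) (at t)"
proof -
  have gm: "g \<in> borel_measurable borel" using gc by (intro borel_measurable_continuous_onI)
  have "((\<lambda>s. integral {a..s} g) has_real_derivative g t) (at t within {a..t+1})"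
    by (rule integral_has_real_derivative) (use gc assms in \<open>auto intro: continuous_on_subset\<close>)
  moreover have "at t within {a..t+1} = at t" using assms by (intro at_within_Icc_at) auto
  ultimately have "((\<lambda>s. integral {a..s} g) has_real_derivative g t) (at t)" by simp
  then have "((\<lambda>s. (LBINT x:{a..}. g x) - integral {a..s} g) has_real_derivative - g t) (at t)"
    by (auto intro!: derivative_eq_intros)
  then show ?thesis
  proof (rule has_field_derivative_transform_within_open[where S="{a<..}"])
    fix x assume "x \<in> {a<..}"
    then show "(LBINT x:{a..}. g x) - integral {a..x} g = (LBINT y:{x..}. g y)"
      using tail_split(2)[OF gm int, of x] by simp
  qed (use assms in auto)
qed

lemma tail_tendsto:
  fixes g :: "real \<Rightarrow> real"
  assumes gm[measurable]: "g \<in> borel_measurable borel" and int: "set_integrable lborel {a..} g"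
  shows "((\<lambda>s. LBINT x:{s..}. g x) \<longlongrightarrow> 0) at_top"
proof -
  have "((\<lambda>s. LBINT x:{a..s}. g x) \<longlongrightarrow> (LBINT x:{a..}. g x)) at_top"
    by (rule tendsto_set_lebesgue_integral_at_top[OF _ int]) auto
  then have "((\<lambda>s. (LBINT x:{a..}. g x) - (LBINT x:{a..s}. g x)) \<longlongrightarrow> (LBINT x:{a..}. g x) - (LBINT x:{a..}. g x)) at_top"
    by (intro tendsto_intros)
  then have *: "((\<lambda>s. (LBINT x:{a..}. g x) - (LBINT x:{a..s}. g x)) \<longlongrightarrow> 0) at_top" by simp
  have "eventually (\<lambda>s. (LBINT x:{a..}. g x) - (LBINT x:{a..s}. g x) = (LBINT x:{s..}. g x)) at_top"
    using eventually_ge_at_top[of a]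
  proof eventually_elim
    case (elim s)
    have "set_integrable lborel {a..s} g"
      by (rule set_integrable_subset[OF int]) auto
    then show ?case using tail_split[OF gm int elim] set_borel_integral_eq_integral by simp
  qed
  from tendsto_cong[OF this] * show ?thesis by simp
qed


lemma const_ivl:
  fixes f :: "real \<Rightarrow> real"
  assumes "s \<le> t" "\<And>x. s \<le> x \<Longrightarrow> x \<le> t \<Longrightarrow> (f has_real_derivative 0) (at x)"
  shows "f t = f s"
proof (cases "s = t")
  case False
  then have "s < t" using assms by simp
  moreover have "continuous_on {s..t} f"
    using assms by (intro continuous_at_imp_continuous_on ballI) (auto intro: DERIV_isCont)
  ultimately show ?thesis by (rule DERIV_isconst_end) (use assms in auto)
qed simp

context srv
begin

interpretation P: prob_space M by (rule ps)

lemma upow_isCont: "0 < e \<Longrightarrow> isCont (\<lambda>x. u x powr e) x"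
  unfolding isCont_def
  by (rule tendsto_powr'[OF u_isCont[unfolded isCont_def] tendsto_const]) (auto simp: u_nonneg)

lemma upow_cont: "0 < e \<Longrightarrow> continuous_on A (\<lambda>x. u x powr e)"
  by (intro continuous_at_imp_continuous_on ballI upow_isCont)

lemma upow_meas: "0 < e \<Longrightarrow> (\<lambda>x. u x powr e) \<in> borel_measurable borel"
  by (intro borel_measurable_continuous_onI upow_cont)

lemma LB_nonneg: "0 \<le> (LBINT x:{t..}. u x powr e)"
  unfolding set_lebesgue_integral_def
  by (intro integral_nonneg_AE) (auto simp: indicator_def)

lemma back_G:
  assumes a: "0 < a" and b: "-1 < b" and gp: "\<forall>x>0. u x = gen_pareto_surv a b x"
    and e: "0 < e" and int: "set_integrable lborel {0..} (\<lambda>x. u x powr e)"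
  shows "0 < (b+1)*e - b \<and> (\<forall>t>0. ((b+1)*e - b) * (LBINT x:{t..}. u x powr e) = (a + b*t) * u t powr e)"
proof -
  define De where "De = (b+1)*e - b"
  define F where "F = (\<lambda>t. LBINT x:{t..}. u x powr e)"
  define h where "h = (\<lambda>t. (a + b*t) * u t powr e)"
  define Q where "Q = {x. 0 < x} \<inter> {x. 0 < 1 + (b/a)*x}"
  have oQ: "open Q" unfolding Q_def
    by (intro open_Int open_Collect_less continuous_intros)
  have gc: "continuous_on UNIV (\<lambda>x. u x powr e)" using e by (rule upow_cont)
  have gm: "(\<lambda>x. u x powr e) \<in> borel_measurable borel" using e by (rule upow_meas)
  have Fd: "(F has_real_derivative (- (u t powr e))) (at t)" if "0 < t" for t
    unfolding F_def by (rule tail_deriv[OF gc int that])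
  have Fc: "isCont F t" if "0 < t" for t using Fd[OF that] by (rule DERIV_isCont)
  have hc: "isCont h t" for t unfolding h_def
    by (intro continuous_intros upow_isCont e)
  have Fnn: "0 \<le> F t" for t unfolding F_def by (rule LB_nonneg)
  have hd: "(h has_real_derivative (- De * u t powr e)) (at t)" if t: "t \<in> Q" for t
  proof (cases "b = 0")
    case True
    have eq: "h x = a * exp (-(e/a) * x)" if "x \<in> Q" for x
    proof -
      have "u x = exp (- x / a)" using gp that True by (auto simp: Q_def gen_pareto_surv_def)
      then have "u x powr e = exp (-(e/a) * x)" by (simp add: powr_def)
      then show ?thesis unfolding h_def using True by simp
    qed
    have "((\<lambda>x. a * exp (-(e/a) * x)) has_real_derivative a * (exp (-(e/a) * t) * (-(e/a)))) (at t)"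
      by (auto intro!: derivative_eq_intros)
    then have D: "(h has_real_derivative a * (exp (-(e/a) * t) * (-(e/a)))) (at t)"
      by (rule has_field_derivative_transform_within_open[OF _ oQ t]) (simp add: eq)
    have "u t powr e = exp (-(e/a) * t)"
      using gp t True by (auto simp: Q_def gen_pareto_surv_def powr_def)
    then have "a * (exp (-(e/a) * t) * (-(e/a))) = - De * u t powr e"
      using a True by (simp add: De_def field_simps)
    then show ?thesis using D by simp
  next
    case False
    define r where "r = 1 - (1 + 1/b) * e"
    have ue: "u x powr e = (1 + (b/a)*x) powr (-(1 + 1/b) * e)" if "x \<in> Q" for x
    proof -
      have "u x = (1 + (b/a)*x) powr (-(1 + 1/b))" using gp that False
        by (auto simp: Q_def gen_pareto_surv_def)
      then show ?thesis by (simp add: powr_powr)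
    qed
    have eq: "h x = a * (1 + (b/a)*x) powr r" if "x \<in> Q" for x
    proof -
      have y: "0 < 1 + (b/a)*x" using that by (auto simp: Q_def)
      have "a + b*x = a * (1 + (b/a)*x)" using a by (simp add: field_simps)
      then have "h x = a * ((1 + (b/a)*x) powr 1 * (1 + (b/a)*x) powr (-(1 + 1/b) * e))"
        unfolding h_def using ue[OF that] y by simp
      also have "(1 + (b/a)*x) powr 1 * (1 + (b/a)*x) powr (-(1 + 1/b) * e) = (1 + (b/a)*x) powr (1 + (-(1 + 1/b) * e))"
        by (rule powr_add[symmetric])
      also have "1 + (-(1 + 1/b) * e) = r" unfolding r_def by (simp add: algebra_simps)
      finally show ?thesis .
    qed
    have y: "0 < 1 + (b/a)*t" using t by (auto simp: Q_def)
    have "((\<lambda>x. a * (1 + (b/a)*x) powr r) has_real_derivative a * (r * (1 + (b/a)*t) powr (r - 1) * (b/a))) (at t)"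
      using a by (intro DERIV_cmult DERIV_fun_powr[where r=r, simplified] y) (auto intro!: derivative_eq_intros)
    then have D: "(h has_real_derivative a * (r * (1 + (b/a)*t) powr (r - 1) * (b/a))) (at t)"
      by (rule has_field_derivative_transform_within_open[OF _ oQ t]) (simp add: eq)
    have "r - 1 = -(1 + 1/b) * e" unfolding r_def by (simp add: algebra_simps)
    then have "a * (r * (1 + (b/a)*t) powr (r - 1) * (b/a)) = (r * b) * u t powr e"
      using ue[OF t] a by simp
    also have "r * b = - De" unfolding r_def De_def using False by (simp add: field_simps)
    finally show ?thesis using D by simp
  qed
  define H where "H = (\<lambda>t. De * F t - h t)"
  have Hd: "(H has_real_derivative 0) (at t)" if "t \<in> Q" for t
  proof -
    have "0 < t" using that by (simp add: Q_def)
    have "(H has_real_derivative De * (- (u t powr e)) - (- De * u t powr e)) (at t)"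
      unfolding H_def by (intro DERIV_diff DERIV_cmult Fd \<open>0 < t\<close> hd that)
    then show ?thesis by simp
  qed
  have Hc: "isCont H t" if "0 < t" for t unfolding H_def
    by (intro continuous_intros Fc that hc)
  have Fnn: "0 \<le> F t" for t unfolding F_def by (rule LB_nonneg)
  show ?thesis
  proof (cases "b < 0")
    case True
    define L where "L = a / (-b)"
    have L: "0 < L" using a True by (simp add: L_def divide_pos_neg)
    have QL: "x \<in> Q \<longleftrightarrow> 0 < x \<and> x < L" for x
    proof -
      have "0 < 1 + (b/a)*x \<longleftrightarrow> 0 < a + b * x" using a by (simp add: field_simps)
      also have "\<dots> \<longleftrightarrow> x < L" using True unfolding L_def by (simp add: field_simps, linarith)
      finally show ?thesis by (auto simp: Q_def)
    qed
    have u0: "u x powr e = 0" if "L \<le> x" for x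
    proof -
      have x: "0 < x" using L that by simp
      have "\<not> 0 < a + b * x" using True that unfolding L_def by (simp add: field_simps)
      then have "1 + (b/a)*x \<le> 0" using a by (simp add: field_simps)
      then have "u x = 0" using gp x True by (simp add: gen_pareto_surv_def max_def)
      then show ?thesis by simp
    qed
    have F0: "F x = 0" if "L \<le> x" for x
    proof -
      have "F x = (LBINT y:{x..}. 0)" unfolding F_def
        by (rule set_lebesgue_integral_cong) (use u0 that in auto)
      then show ?thesis by (simp add: set_lebesgue_integral_def)
    qed
    have h0: "h x = 0" if "L \<le> x" for x unfolding h_def using u0[OF that] by simp
    have main: "De * F t = h t" if "0 < t" for t
    proof (cases "t < L")
      case True
      have "H L = H t"
      proof (rule DERIV_isconst_end[OF True])
        show "continuous_on {t..L} H" using that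
          by (intro continuous_at_imp_continuous_on ballI Hc) auto
        fix x assume "t < x" "x < L"
        then show "(H has_real_derivative 0) (at x)" using that by (intro Hd) (simp add: QL)
      qed
      then show ?thesis using F0 h0 by (simp add: H_def)
    next
      case False then show ?thesis using F0 h0 by simp
    qed
    have "0 < (b+1)*e" using b e by simp
    then have "0 < De" using True by (simp add: De_def)
    then show ?thesis using main by (simp add: De_def F_def h_def)
  next
    case False
    have Qpos: "x \<in> Q \<longleftrightarrow> 0 < x" for x
    proof -
      have "0 < x \<Longrightarrow> 0 \<le> (b/a)*x" using False a by simp
      then show ?thesis by (auto simp: Q_def)
    qed
    have Hconst: "H t = H 1" if "0 < t" for t
    proof (cases "t \<le> 1")
      case True
      have "H 1 = H t" by (rule const_ivl[OF True]) (use that in \<open>auto intro!: Hd simp: Qpos\<close>)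
      then show ?thesis by simp
    next
      case False
      show "H t = H 1" by (rule const_ivl) (use False in \<open>auto intro!: Hd simp: Qpos\<close>)
    qed
    have Ft: "(F \<longlongrightarrow> 0) at_top" unfolding F_def by (rule tail_tendsto[OF gm int])
    have De_pos: "0 < De"
    proof (rule ccontr)
      assume nD: "\<not> 0 < De"
      have b0: "b \<noteq> 0"
      proof
        assume "b = 0" then have "De = e" by (simp add: De_def)
        with e nD show False by simp
      qed
      have bpos: "0 < b" using False b0 by simp
      have ye: "u x powr e = (1 + (b/a)*x) powr (-(1 + 1/b) * e)" if "0 < x" for x
      proof -
        have y: "0 < 1 + (b/a)*x" using bpos a that by (simp add: add_pos_nonneg)
        have "u x = (1 + (b/a)*x) powr (-(1 + 1/b))" using gp that b0 y
          by (simp add: gen_pareto_surv_def)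
        then show ?thesis by (simp add: powr_powr)
      qed
      define K where "K = (\<lambda>x. F x + (a/b) * ln (1 + (b/a)*x))"
      have Kd: "(K has_real_derivative (- (u x powr e) + (a/b) * ((b/a) / (1 + (b/a)*x)))) (at x)" if "0 < x" for x
      proof -
        have y: "0 < 1 + (b/a)*x" using bpos a that by (simp add: add_pos_nonneg)
        have "((\<lambda>x. ln (1 + (b/a)*x)) has_real_derivative (b/a) / (1 + (b/a)*x)) (at x)"
          using y a by (auto intro!: derivative_eq_intros)
        then show ?thesis unfolding K_def by (intro DERIV_add Fd that DERIV_cmult)
      qed
      have Kneg: "- (u x powr e) + (a/b) * ((b/a) / (1 + (b/a)*x)) \<le> 0" if "0 < x" for x
      proof -
        have y1: "1 \<le> 1 + (b/a)*x" using bpos a that by simp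
        have ex: "-1 \<le> -(1 + 1/b) * e"
        proof -
          have "(b+1)*e \<le> b" using nD by (simp add: De_def)
          then have "(b+1)*e/b \<le> 1" using bpos by (simp add: field_simps)
          moreover have "(1 + 1/b) * e = (b+1)*e/b" using bpos by (simp add: field_simps)
          ultimately have h: "(1 + 1/b) * e \<le> 1" by simp
          then show ?thesis by (simp only: mult_minus_left neg_le_iff_le)
        qed
        have "(1 + (b/a)*x) powr (-1) \<le> (1 + (b/a)*x) powr (-(1 + 1/b) * e)" by (rule powr_mono[OF ex y1])
        moreover have "(1 + (b/a)*x) powr (-1) = 1 / (1 + (b/a)*x)" using y1 by (simp add: powr_minus divide_inverse)
        moreover have "(a/b) * ((b/a) / (1 + (b/a)*x)) = 1 / (1 + (b/a)*x)" using a bpos by simp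
        ultimately show ?thesis using ye[OF that] by simp
      qed
      have Kmono: "K x \<le> K 1" if "1 \<le> x" for x
      proof (rule DERIV_nonpos_imp_nonincreasing[OF that])
        fix y assume "1 \<le> y" "y \<le> x"
        then show "\<exists>d. (K has_real_derivative d) (at y) \<and> d \<le> 0"
          using Kd[of y] Kneg[of y] by auto
      qed
      define z where "z = exp ((b/a) * (\<bar>K 1\<bar> + 1))"
      define x0 where "x0 = max 1 ((a/b) * (z - 1))"
      have "(b/a) * ((a/b) * (z - 1)) \<le> (b/a) * x0"
        unfolding x0_def using a bpos by (intro mult_left_mono) auto
      then have "z \<le> 1 + (b/a)*x0" using a bpos by simp
      moreover have "0 < z" by (simp add: z_def)
      ultimately have "ln z \<le> ln (1 + (b/a)*x0)" by simp
      then have "(b/a) * (\<bar>K 1\<bar> + 1) \<le> ln (1 + (b/a)*x0)" by (simp add: z_def)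
      then have "(a/b) * ((b/a) * (\<bar>K 1\<bar> + 1)) \<le> (a/b) * ln (1 + (b/a)*x0)"
        using a bpos by (intro mult_left_mono) auto
      then have "\<bar>K 1\<bar> + 1 \<le> (a/b) * ln (1 + (b/a)*x0)" using a bpos by simp
      then have "K 1 < K x0" unfolding K_def using Fnn[of x0] by (simp add: K_def)
      moreover have "K x0 \<le> K 1" by (rule Kmono) (simp add: x0_def)
      ultimately show False by simp
    qed
    have ht: "(h \<longlongrightarrow> 0) at_top"
    proof (cases "b = 0")
      case True
      have ev: "eventually (\<lambda>x. a * exp (-(e/a) * x) = h x) at_top"
        using eventually_gt_at_top[of 0]
      proof eventually_elim
        case (elim x)
        have "u x = exp (- x / a)" using gp elim True by (auto simp: gen_pareto_surv_def)
        then have "u x powr e = exp (-(e/a) * x)" by (simp add: powr_def)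
        then show ?case unfolding h_def using True by simp
      qed
      have "filterlim (\<lambda>x. -(e/a) * x) at_bot at_top"
        by (rule filterlim_tendsto_neg_mult_at_bot[OF tendsto_const _ filterlim_ident]) (use a e in simp)
      then have "((\<lambda>x. exp (-(e/a) * x)) \<longlongrightarrow> 0) at_top"
        by (rule filterlim_compose[OF exp_at_bot])
      then have "((\<lambda>x. a * exp (-(e/a) * x)) \<longlongrightarrow> a * 0) at_top"
        by (intro tendsto_intros)
      then show ?thesis using tendsto_cong[OF ev] by simp
    next
      case b0: False
      have bpos: "0 < b" using b0 False by simp
      define r where "r = 1 - (1 + 1/b) * e"
      have r: "r < 0"
      proof -
        have "r = - De / b" unfolding r_def De_def using bpos by (simp add: field_simps)
        then show ?thesis using De_pos bpos by (simp add: divide_pos_pos)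
      qed
      have ev: "eventually (\<lambda>x. a * (1 + (b/a)*x) powr r = h x) at_top"
        using eventually_gt_at_top[of 0]
      proof eventually_elim
        case (elim x)
        have y: "0 < 1 + (b/a)*x" using bpos a elim by (simp add: add_pos_nonneg)
        have "u x = (1 + (b/a)*x) powr (-(1 + 1/b))" using gp elim b0 y
          by (simp add: gen_pareto_surv_def)
        then have ue: "u x powr e = (1 + (b/a)*x) powr (-(1 + 1/b) * e)" by (simp add: powr_powr)
        have "a + b*x = a * (1 + (b/a)*x)" using a by (simp add: field_simps)
        then have "h x = a * ((1 + (b/a)*x) powr 1 * (1 + (b/a)*x) powr (-(1 + 1/b) * e))"
          unfolding h_def using ue y by simp
        also have "(1 + (b/a)*x) powr 1 * (1 + (b/a)*x) powr (-(1 + 1/b) * e) = (1 + (b/a)*x) powr (1 + (-(1 + 1/b) * e))"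
          by (rule powr_add[symmetric])
        also have "1 + (-(1 + 1/b) * e) = r" unfolding r_def by (simp add: algebra_simps)
        finally show ?case by simp
      qed
      have "filterlim (\<lambda>x. 1 + (b/a)*x) at_top at_top"
        by (rule filterlim_tendsto_add_at_top[OF tendsto_const filterlim_tendsto_pos_mult_at_top[OF tendsto_const _ filterlim_ident]])
           (use a bpos in simp)
      then have "((\<lambda>x. (1 + (b/a)*x) powr r) \<longlongrightarrow> 0) at_top" by (rule tendsto_neg_powr[OF r])
      then have "((\<lambda>x. a * (1 + (b/a)*x) powr r) \<longlongrightarrow> a * 0) at_top" by (intro tendsto_intros)
      then show ?thesis using tendsto_cong[OF ev] by simp
    qed
    have "(H \<longlongrightarrow> De * 0 - 0) at_top" unfolding H_def by (intro tendsto_intros Ft ht)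
    then have Hlim: "(H \<longlongrightarrow> 0) at_top" by simp
    have ev: "eventually (\<lambda>t. H t = H 1) at_top"
      using eventually_gt_at_top[of 0] by eventually_elim (rule Hconst)
    have "((\<lambda>t::real. H 1) \<longlongrightarrow> 0) at_top" using Lim_transform_eventually[OF Hlim ev] by simp
    then have "H 1 = 0" by (simp add: tendsto_const_iff)
    then have "De * F t = h t" if "0 < t" for t using Hconst[OF that] unfolding H_def by simp
    then show ?thesis using De_pos by (simp add: De_def F_def h_def)
  qed
qed

lemma mrl_eq: "mean_residual_life M X t = (LBINT x:{t..}. u x) / u t"
  unfolding mean_residual_life_def using layer by simp

lemma Rint_eq: "(LBINT x:{t..}. (u x / u t) powr c) = (LBINT x:{t..}. u x powr c) / u t powr c"
  by (simp add: powr_divide u_nonneg set_integral_divide_zero)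

lemma backward:
  assumes c: "0 < c" and int: "set_integrable lborel {0..} (\<lambda>x. u x powr c)"
    and a: "0 < a" and b: "-1 < b" and gp: "\<forall>x>0. u x = gen_pareto_surv a b x"
  shows "\<exists>k. \<forall>t>0. (LBINT x:{t..}. (u x / u t) powr c) = k * mean_residual_life M X t"
proof -
  define Dc where "Dc = (b+1)*c - b"
  have G: "0 < Dc" "\<And>t. 0 < t \<Longrightarrow> Dc * (LBINT x:{t..}. u x powr c) = (a + b*t) * u t powr c"
    using back_G[OF a b gp c int] by (auto simp: Dc_def)
  have u1: "(\<lambda>x. u x powr 1) = u" by (rule ext) (simp add: u_nonneg)
  have int1: "set_integrable lborel {0..} (\<lambda>x. u x powr 1)" unfolding u1 by (rule layer_int)
  have G1: "\<And>t. 0 < t \<Longrightarrow> (LBINT x:{t..}. u x) = (a + b*t) * u t"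
    using back_G[OF a b gp _ int1] by (simp add: u_nonneg abs_of_nonneg)
  show ?thesis
  proof (intro exI allI impI)
    fix t :: real assume t: "0 < t"
    show "(LBINT x:{t..}. (u x / u t) powr c) = (1 / Dc) * mean_residual_life M X t"
    proof (cases "u t = 0")
      case True
      then show ?thesis by (simp add: mrl_eq set_lebesgue_integral_def)
    next
      case False
      then have up: "0 < u t" using u_nonneg[of t] by simp
      have "(LBINT x:{t..}. u x powr c) = (a + b*t) * u t powr c / Dc"
        using G(2)[OF t] G(1) by (simp add: field_simps)
      then have "(LBINT x:{t..}. (u x / u t) powr c) = (a + b*t) * u t powr c / Dc / u t powr c"
        by (simp only: Rint_eq)
      also have "\<dots> = (a + b*t) / Dc" using up by simp
      also have "\<dots> = (1 / Dc) * mean_residual_life M X t"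
        using G1[OF t] up by (simp add: mrl_eq)
      finally show ?thesis .
    qed
  qed
qed

lemma u_0: "u 0 = 1" by (rule u_le0) simp

lemma T_cont: "isCont (\<lambda>t. LBINT x:{t..}. u x) t" if "-1 < t"
  using tail_deriv[OF u_cont layer_int that] by (rule DERIV_isCont)

lemma forward:
  assumes c: "0 < c" "c \<noteq> 1" and int: "set_integrable lborel {0..} (\<lambda>x. u x powr c)"
    and rel: "\<forall>t>0. (LBINT x:{t..}. (u x / u t) powr c) = k * mean_residual_life M X t"
  shows "\<exists>a b. a > 0 \<and> b > -1 \<and> (\<forall>x>0. u x = gen_pareto_surv a b x)"
proof -
  define S where "S = (\<lambda>t. LBINT x:{t..}. u x powr c)"
  define TT where "TT = (\<lambda>t. LBINT x:{t..}. u x)"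
  define P where "P = {x. 0 < x} \<inter> {x. 0 < u x}"
  have oP: "open P" unfolding P_def
    by (intro open_Int open_Collect_less continuous_intros u_cont)
  have gc: "continuous_on UNIV (\<lambda>x. u x powr c)" using c by (intro upow_cont)
  have Sd: "(S has_real_derivative (- (u t powr c))) (at t)" if "0 < t" for t
    unfolding S_def by (rule tail_deriv[OF gc int that])
  have Td: "(TT has_real_derivative (- u t)) (at t)" if "-1 < t" for t
    unfolding TT_def by (rule tail_deriv[OF u_cont layer_int that])
  have Tc: "isCont TT t" if "-1 < t" for t using Td[OF that] by (rule DERIV_isCont)
  have Tpos: "0 < TT t" if "0 < u t" for t using T_pos[OF that] layer[of t] by (simp add: TT_def)
  have Pdown: "s \<in> P" if "t \<in> P" "0 < s" "s \<le> t" for s t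
    using that u_antimono[of s t] by (auto simp: P_def)
  have PD: "0 < t \<and> 0 < u t" if "t \<in> P" for t using that by (auto simp: P_def)
  have eq1: "S t = k * TT t * u t powr (c - 1)" if "t \<in> P" for t
  proof -
    have t: "0 < t" and ut: "0 < u t" using PD[OF that] by auto
    have "S t / u t powr c = k * (TT t / u t)"
      using rel t by (simp add: Rint_eq mrl_eq S_def TT_def)
    then have "S t = k * TT t * (u t powr c / u t)" using ut by (simp add: field_simps)
    also have "u t powr c / u t = u t powr (c - 1)" using ut by (simp add: powr_diff)
    finally show ?thesis .
  qed
  have k0: "k \<noteq> 0" if "t \<in> P" for t
  proof
    assume k: "k = 0"
    have t: "0 < t" and ut: "0 < u t" using PD[OF that] by auto
    have "((\<lambda>x. 0) has_real_derivative 0) (at t)" by simp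
    then have "(S has_real_derivative 0) (at t)"
      by (rule has_field_derivative_transform_within_open[OF _ oP that]) (simp add: eq1 k)
    with Sd[OF t] have "- (u t powr c) = 0" by (rule DERIV_unique)
    with ut show False by simp
  qed
  have Ud: "\<exists>U. (u has_real_derivative U) (at t)" if tP: "t \<in> P" for t
  proof -
    have t: "0 < t" and ut: "0 < u t" using PD[OF tP] by auto
    define W where "W = (\<lambda>x. S x / (k * TT x))"
    have Wu: "W x = u x powr (c - 1)" if "x \<in> P" for x
      using eq1[OF that] k0[OF that] Tpos[of x] PD[OF that] by (simp add: W_def)
    have "(W has_real_derivative ((- (u t powr c)) * (k * TT t) - S t * (k * (- u t))) / ((k * TT t) * (k * TT t))) (at t)"
      unfolding W_def
      by (intro DERIV_divide Sd t DERIV_cmult Td) (use k0[OF tP] Tpos[OF ut] t in auto)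
    then have "((\<lambda>x. W x powr (1 / (c - 1))) has_real_derivative
        (1 / (c - 1)) * W t powr (1 / (c - 1) - of_nat 1) * (((- (u t powr c)) * (k * TT t) - S t * (k * (- u t))) / ((k * TT t) * (k * TT t)))) (at t)"
      by (rule DERIV_fun_powr) (use Wu[OF tP] ut in simp)
    then have "(u has_real_derivative
        (1 / (c - 1)) * W t powr (1 / (c - 1) - of_nat 1) * (((- (u t powr c)) * (k * TT t) - S t * (k * (- u t))) / ((k * TT t) * (k * TT t)))) (at t)"
    proof (rule has_field_derivative_transform_within_open[OF _ oP tP])
      fix x assume "x \<in> P"
      then have "W x powr (1 / (c - 1)) = u x powr ((c - 1) * (1 / (c - 1)))"
        by (simp add: Wu powr_powr)
      also have "\<dots> = u x" using c by (simp add: u_nonneg)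
      finally show "W x powr (1 / (c - 1)) = u x" .
    qed
    then show ?thesis by blast
  qed
  define b where "b = -1 - (k - 1) / (k * (c - 1))"
  have mD: "((\<lambda>x. TT x / u x) has_real_derivative b) (at t)" if tP: "t \<in> P" for t
  proof -
    have t: "0 < t" and ut: "0 < u t" using PD[OF tP] by auto
    obtain U where U: "(u has_real_derivative U) (at t)" using Ud[OF tP] by blast
    have k: "k \<noteq> 0" using k0[OF tP] .
    have "((\<lambda>x. k * TT x * u x powr (c - 1)) has_real_derivative
          k * TT t * ((c - 1) * u t powr (c - 1 - of_nat 1) * U) + k * (- u t) * u t powr (c - 1)) (at t)"
      by (rule DERIV_mult'[OF DERIV_cmult[OF Td] DERIV_fun_powr[OF U ut]]) (use t in simp)
    then have "(S has_real_derivative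
          k * TT t * ((c - 1) * u t powr (c - 1 - of_nat 1) * U) + k * (- u t) * u t powr (c - 1)) (at t)"
      by (rule has_field_derivative_transform_within_open[OF _ oP tP]) (simp add: eq1)
    with Sd[OF t] have E: "- (u t powr c) = k * TT t * ((c - 1) * u t powr (c - 1 - of_nat 1) * U) + k * (- u t) * u t powr (c - 1)"
      by (rule DERIV_unique)
    define p where "p = u t powr (c - 2)"
    have p: "0 < p" using ut by (simp add: p_def)
    have ps: "x powr (y + 1) = x powr y * x" if "0 < x" for x y :: real
      using that by (simp add: powr_add)
    have p1: "u t powr (c - 1) = p * u t" unfolding p_def using ps[OF ut, of "c - 2"]
      by simp
    have p2: "u t powr c = p * (u t)^2" using ps[OF ut, of "c - 1"] p1
      by (simp add: power2_eq_square)
    have p0: "u t powr (c - 1 - of_nat 1) = p" unfolding p_def by simp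
    from E have "- (p * (u t)^2) = p * (k * (- ((u t)^2)) + k * TT t * (c - 1) * U)"
      unfolding p1 p2 p0 by (simp add: algebra_simps power2_eq_square)
    then have "- ((u t)^2) = k * (- ((u t)^2)) + k * TT t * (c - 1) * U" using p mult_left_cancel[of p] by (metis minus_mult_right order_less_irrefl)
    then have TU: "TT t * U = (u t)^2 * (k - 1) / (k * (c - 1))" using k c
      by (simp add: field_simps)
    have "((\<lambda>x. TT x / u x) has_real_derivative ((- u t) * u t - TT t * U) / (u t * u t)) (at t)"
      by (intro DERIV_divide Td U) (use t ut in auto)
    moreover have "((- u t) * u t - TT t * U) / (u t * u t) = b"
      unfolding b_def TU using ut by (simp add: field_simps power2_eq_square)
    ultimately show ?thesis by simp
  qed
  define a where "a = TT 0"
  have a: "0 < a" unfolding a_def using Tpos[of 0] u_0 by simp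
  have mlin: "TT t / u t = a + b * t" if tP: "t \<in> P" for t
  proof -
    have t: "0 < t" and ut: "0 < u t" using PD[OF tP] by auto
    have "(\<lambda>x. TT x / u x - b * x) t = (\<lambda>x. TT x / u x - b * x) 0"
    proof (rule DERIV_isconst_end[OF t])
      show "continuous_on {0..t} (\<lambda>x. TT x / u x - b * x)"
      proof (intro continuous_at_imp_continuous_on ballI)
        fix x assume x: "x \<in> {0..t}"
        then have "0 < u x" using ut u_antimono[of x t] by auto
        then show "isCont (\<lambda>x. TT x / u x - b * x) x"
          using x by (intro continuous_intros Tc u_isCont) auto
      qed
      fix x assume "0 < x" "x < t"
      then have xP: "x \<in> P" using Pdown[OF tP] by simp
      have "((\<lambda>x. TT x / u x - b * x) has_real_derivative b - b * 1) (at x)"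
        by (intro DERIV_diff mD xP DERIV_cmult DERIV_ident)
      then show "((\<lambda>x. TT x / u x - b * x) has_real_derivative 0) (at x)" by simp
    qed
    then show ?thesis using u_0 by (simp add: a_def)
  qed
  have Tlin: "TT t = (a + b * t) * u t" "0 < a + b * t" if tP: "t \<in> P" for t
  proof -
    have ut: "0 < u t" using PD[OF tP] by auto
    show "TT t = (a + b * t) * u t" using mlin[OF tP] ut by (simp add: field_simps)
    show "0 < a + b * t" using mlin[OF tP] ut Tpos[OF ut] by (metis divide_pos_pos)
  qed
  have Uval: "U = - (1 + b) * u t / (a + b * t)" if tP: "t \<in> P" and U: "(u has_real_derivative U) (at t)" for t U
  proof -
    have t: "0 < t" and ut: "0 < u t" using PD[OF tP] by auto
    have dl: "((\<lambda>x. a + b * x) has_real_derivative b) (at t)" by (auto intro!: derivative_eq_intros)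
    have "((\<lambda>x. (a + b * x) * u x) has_real_derivative (0 + b * 1) * u t + (a + b * t) * U) (at t)"
      using DERIV_mult'[OF dl U] by (simp add: algebra_simps)
    then have "(TT has_real_derivative (0 + b * 1) * u t + (a + b * t) * U) (at t)"
      by (rule has_field_derivative_transform_within_open[OF _ oP tP]) (simp add: Tlin)
    with Td[of t] t have "- u t = (0 + b * 1) * u t + (a + b * t) * U" by (intro DERIV_unique) auto
    then show ?thesis using Tlin(2)[OF tP] by (simp add: field_simps)
  qed
  have posP: "0 < a + b * x" if "0 \<le> x" "x \<le> t" "t \<in> P" for x t
  proof (cases "x = 0")
    case True then show ?thesis using a by simp
  next
    case False
    then have "x \<in> P" using Pdown[OF that(3)] that by simp
    then show ?thesis by (rule Tlin(2))
  qed
  have dl: "((\<lambda>x. a + b * x) has_real_derivative b) (at x)" for x by (auto intro!: derivative_eq_intros)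
  define q where "q = 1 + 1 / b"
  have dpow: "((\<lambda>x. (a + b * x) powr q) has_real_derivative q * (a + b * x) powr (q - of_nat 1) * b) (at x)"
    if "0 < a + b * x" for x
    by (rule DERIV_fun_powr[OF dl that])
  have Vd0: "((\<lambda>x. u x * exp (x / a)) has_real_derivative 0) (at x)" if b0: "b = 0" and xP: "x \<in> P" for x
  proof -
    obtain U where U: "(u has_real_derivative U) (at x)" using Ud[OF xP] by blast
    have de: "((\<lambda>x. exp (x / a)) has_real_derivative exp (x / a) * (1 / a)) (at x)"
      using a by (auto intro!: derivative_eq_intros)
    have "((\<lambda>x. u x * exp (x / a)) has_real_derivative u x * (exp (x / a) * (1 / a)) + U * exp (x / a)) (at x)"
      by (rule DERIV_mult'[OF U de])
    moreover have "U = - u x / a" using Uval[OF xP U] b0 by simp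
    ultimately show ?thesis using a by simp
  qed
  have Vd1: "((\<lambda>x. u x * (a + b * x) powr q) has_real_derivative 0) (at x)" if b0: "b \<noteq> 0" and xP: "x \<in> P" for x
  proof -
    obtain U where U: "(u has_real_derivative U) (at x)" using Ud[OF xP] by blast
    have y: "0 < a + b * x" using Tlin(2)[OF xP] .
    have "((\<lambda>x. u x * (a + b * x) powr q) has_real_derivative u x * (q * (a + b * x) powr (q - of_nat 1) * b) + U * (a + b * x) powr q) (at x)"
      by (rule DERIV_mult'[OF U dpow[OF y]])
    moreover have "u x * (q * (a + b * x) powr (q - of_nat 1) * b) + U * (a + b * x) powr q = 0"
    proof -
      have U1: "U * (a + b * x) = - (1 + b) * u x" using Uval[OF xP U] y by (simp add: field_simps)
      have P1: "(a + b * x) powr q = (a + b * x) powr (q - 1) * (a + b * x)"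
        using y by (simp add: powr_diff)
      have qb: "q * b = 1 + b" using b0 by (simp add: q_def field_simps)
      have "u x * (q * (a + b * x) powr (q - of_nat 1) * b) + U * (a + b * x) powr q
          = (a + b * x) powr (q - 1) * (u x * (q * b) + U * (a + b * x))"
        unfolding P1 by (simp add: algebra_simps)
      also have "\<dots> = 0" unfolding qb U1 by (simp add: algebra_simps)
      finally show ?thesis .
    qed
    ultimately show ?thesis by simp
  qed
  have cpow: "isCont (\<lambda>x. (a + b * x) powr q) x" if "0 < a + b * x" for x
    using dpow[OF that] by (rule DERIV_isCont)
  have V0: "u t * exp (t / a) = 1" if b0: "b = 0" and tP: "t \<in> P" for t
  proof -
    have t: "0 < t" using PD[OF tP] by simp
    have "(\<lambda>x. u x * exp (x / a)) t = (\<lambda>x. u x * exp (x / a)) 0"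
    proof (rule DERIV_isconst_end[OF t])
      show "continuous_on {0..t} (\<lambda>x. u x * exp (x / a))"
        using a by (intro continuous_at_imp_continuous_on ballI continuous_intros u_isCont) auto
      fix x assume "0 < x" "x < t"
      then show "((\<lambda>x. u x * exp (x / a)) has_real_derivative 0) (at x)"
        using Pdown[OF tP] by (intro Vd0 b0) simp
    qed
    then show ?thesis using u_0 by simp
  qed
  have V1: "u t * (a + b * t) powr q = a powr q" if b0: "b \<noteq> 0" and tP: "t \<in> P" for t
  proof -
    have t: "0 < t" using PD[OF tP] by simp
    have "(\<lambda>x. u x * (a + b * x) powr q) t = (\<lambda>x. u x * (a + b * x) powr q) 0"
    proof (rule DERIV_isconst_end[OF t])
      show "continuous_on {0..t} (\<lambda>x. u x * (a + b * x) powr q)"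
        using posP[OF _ _ tP] by (intro continuous_at_imp_continuous_on ballI continuous_intros u_isCont cpow) auto
      fix x assume "0 < x" "x < t"
      then show "((\<lambda>x. u x * (a + b * x) powr q) has_real_derivative 0) (at x)"
        using Pdown[OF tP] by (intro Vd1 b0) simp
    qed
    then show ?thesis using u_0 by simp
  qed
  have gpV: "u x = (1 + (b/a)*x) powr (-(1 + 1/b))" if b0: "b \<noteq> 0" and xP: "x \<in> P" for x
  proof -
    have y: "0 < a + b * x" using Tlin(2)[OF xP] .
    have eqy: "1 + (b/a)*x = (a + b * x) / a" using a by (simp add: field_simps)
    have e1: "(1 + (b/a)*x) powr (-(1 + 1/b)) = inverse ((1 + (b/a)*x) powr q)"
      unfolding q_def by (rule powr_minus)
    have e2: "(1 + (b/a)*x) powr q = (a + b*x) powr q / a powr q"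
      unfolding eqy by (rule powr_divide)
    have "(1 + (b/a)*x) powr (-(1 + 1/b)) = a powr q / (a + b * x) powr q"
      unfolding e1 e2 by simp
    also have "\<dots> = u x" using V1[OF b0 xP] y by (simp add: field_simps)
    finally show ?thesis by simp
  qed
  show ?thesis
  proof (cases "\<forall>t>0. 0 < u t")
    case True
    then have allP: "t \<in> P" if "0 < t" for t using that by (simp add: P_def)
    have b0: "0 \<le> b"
    proof (rule ccontr)
      assume "\<not> 0 \<le> b"
      then have "0 < a / (-b)" using a by (simp add: divide_pos_neg)
      from Tlin(2)[OF allP[OF this]] \<open>\<not> 0 \<le> b\<close> show False by simp
    qed
    show ?thesis
    proof (intro exI conjI allI impI)
      show "0 < a" "-1 < b" using a b0 by auto
      fix x :: real assume x: "0 < x"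
      show "u x = gen_pareto_surv a b x"
      proof (cases "b = 0")
        case True
        have "u x = 1 / exp (x / a)" using V0[OF True allP[OF x]] by (simp add: field_simps)
        then show ?thesis using True by (simp add: gen_pareto_surv_def exp_minus divide_inverse)
      next
        case False
        have "0 < 1 + (b/a)*x" using a b0 x by (simp add: add_pos_nonneg)
        then show ?thesis using gpV[OF False allP[OF x]] False by (simp add: gen_pareto_surv_def)
      qed
    qed
  next
    case False
    then obtain t0 where t0: "0 < t0" "u t0 = 0" using u_nonneg by (metis less_eq_real_def)
    define Z where "Z = {x. u x = 0}"
    have cZ: "closed Z" unfolding Z_def by (intro closed_Collect_eq u_cont continuous_intros)
    have Zpos: "0 < x" if "x \<in> Z" for x
      using that u_le0[of x] by (force simp: Z_def)
    have bZ: "bdd_below Z" using Zpos by (auto simp: bdd_below_def intro!: exI[of _ 0] less_imp_le)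
    define L where "L = Inf Z"
    have LZ: "L \<in> Z" unfolding L_def by (rule closed_contains_Inf) (use t0 bZ cZ in \<open>auto simp: Z_def\<close>)
    have uL: "u L = 0" and L: "0 < L" using LZ Zpos by (auto simp: Z_def)
    have below: "x \<in> P" if "0 < x" "x < L" for x
    proof -
      have "x \<notin> Z" using that cInf_lower[OF _ bZ, of x] by (auto simp: L_def)
      then show ?thesis using that u_nonneg[of x] by (auto simp: Z_def P_def)
    qed
    have above: "u x = 0" if "L \<le> x" for x using u_antimono[OF that] uL u_nonneg[of x] by simp
    have L2: "L / 2 \<in> P" using L by (intro below) auto
    have b0: "b \<noteq> 0"
    proof
      assume b0: "b = 0"
      have "(\<lambda>x. u x * exp (x / a)) L = (\<lambda>x. u x * exp (x / a)) (L / 2)"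
      proof (rule DERIV_isconst_end[where f="\<lambda>x. u x * exp (x / a)" and a="L/2" and b=L])
        show "L / 2 < L" using L by simp
        show "continuous_on {L/2..L} (\<lambda>x. u x * exp (x / a))"
          using a by (intro continuous_at_imp_continuous_on ballI continuous_intros u_isCont) auto
        fix x assume "L / 2 < x" "x < L"
        then show "((\<lambda>x. u x * exp (x / a)) has_real_derivative 0) (at x)"
          using L by (intro Vd0 b0 below) auto
      qed
      then show False using V0[OF b0 L2] uL by simp
    qed
    have aL: "a + b * L \<le> 0"
    proof (rule ccontr)
      assume "\<not> a + b * L \<le> 0"
      then have aL: "0 < a + b * L" by simp
      have pos: "0 < a + b * x" if "x \<le> L" "0 \<le> x" for x
      proof (cases "0 \<le> b")
        case True then show ?thesis using a that by (simp add: add_pos_nonneg)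
      next
        case False
        then have "b * L \<le> b * x" using that by (intro mult_left_mono_neg) auto
        then show ?thesis using aL by simp
      qed
      have "(\<lambda>x. u x * (a + b * x) powr q) L = (\<lambda>x. u x * (a + b * x) powr q) (L / 2)"
      proof (rule DERIV_isconst_end[where f="\<lambda>x. u x * (a + b * x) powr q" and a="L/2" and b=L])
        show "L / 2 < L" using L by simp
        show "continuous_on {L/2..L} (\<lambda>x. u x * (a + b * x) powr q)"
          using pos L by (intro continuous_at_imp_continuous_on ballI continuous_intros u_isCont cpow) auto
        fix x assume "L / 2 < x" "x < L"
        then show "((\<lambda>x. u x * (a + b * x) powr q) has_real_derivative 0) (at x)"
          using L by (intro Vd1 b0 below) auto
      qed
      from this V1[OF b0 L2] have "u L * (a + b * L) powr q = a powr q" by (rule trans)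
      then have "a powr q = 0" using uL by simp
      then show False using a by simp
    qed
    have bneg: "b < 0"
    proof (rule ccontr)
      assume "\<not> b < 0"
      then have "0 \<le> b * L" using L by simp
      then show False using aL a by simp
    qed
    have aL0: "a + b * L = 0"
    proof (rule ccontr)
      assume "a + b * L \<noteq> 0"
      then have "a + b * L < 0" using aL by simp
      define t1 where "t1 = a / (-b)"
      have t1: "0 < t1" using a bneg by (simp add: t1_def divide_pos_neg)
      have "t1 < L" using \<open>a + b * L < 0\<close> bneg by (simp add: t1_def field_simps)
      then have "t1 \<in> P" using t1 by (intro below)
      from Tlin(2)[OF this] bneg show False by (simp add: t1_def)
    qed
    have qneg: "q < 0"
    proof (rule ccontr)
      assume "\<not> q < 0"
      then have q: "0 \<le> q" by simp
      have ge1: "1 \<le> u x" if "x \<in> {0<..<L}" for x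
      proof -
        have xP: "x \<in> P" using that by (intro below) auto
        have y: "0 < a + b * x" using Tlin(2)[OF xP] .
        have A: "(a + b * x) powr q \<le> a powr q" using q y bneg that by (intro powr_mono2) (auto simp: mult_nonpos_nonneg)
        have B: "u x * (a + b * x) powr q = a powr q" by (rule V1[OF b0 xP])
        have C: "0 < (a + b * x) powr q" using y by simp
        show ?thesis
        proof (rule ccontr)
          assume "\<not> 1 \<le> u x"
          then have "u x * (a + b * x) powr q < 1 * (a + b * x) powr q"
            using C by (intro mult_strict_right_mono) auto
          then show False using A B by simp
        qed
      qed
      have "(u \<longlongrightarrow> u L) (at_left L)" using u_isCont[of L]
        by (simp add: isCont_def filterlim_at_split)
      moreover have "eventually (\<lambda>x. 1 \<le> u x) (at_left L)"
        using eventually_at_left_real[OF L] by eventually_elim (rule ge1)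
      ultimately have "1 \<le> u L" by (intro tendsto_lowerbound) auto
      then show False using uL by simp
    qed
    have bgt: "-1 < b"
    proof -
      have "1 / b < -1" using qneg by (simp add: q_def)
      then show ?thesis using bneg by (simp add: field_simps)
    qed
    show ?thesis
    proof (intro exI conjI allI impI)
      show "0 < a" "-1 < b" using a bgt by auto
      fix x :: real assume x: "0 < x"
      show "u x = gen_pareto_surv a b x"
      proof (cases "x < L")
        case True
        have xP: "x \<in> P" using x True by (intro below)
        have "0 < 1 + (b/a)*x" using Tlin(2)[OF xP] a by (simp add: field_simps)
        then show ?thesis using gpV[OF b0 xP] b0 by (simp add: gen_pareto_surv_def)
      next
        case False
        have "b * L \<ge> b * x" using False bneg by (intro mult_left_mono_neg) auto
        then have "a + b * x \<le> 0" using aL0 by simp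
        then have "1 + (b/a)*x \<le> 0" using a by (simp add: field_simps)
        then show ?thesis using above[of x] False b0 by (simp add: gen_pareto_surv_def max_def)
      qed
    qed
  qed
qed

end

theorem theorem3p4:
  fixes M :: "'a measure" and X :: "'a \<Rightarrow> real" and \<theta> \<alpha> \<beta> :: real
  assumes "prob_space M"
    and "X \<in> borel_measurable M"
    and "AE \<omega> in M. 0 \<le> X \<omega>"
    and "absolutely_continuous lborel (distr M lborel X)"
    and "integrable M X"
    and "\<theta> > 0" and "\<alpha> > 0" and "\<beta> > 0"
    and "\<alpha> + \<beta> * \<theta> \<noteq> 1"
    and "set_integrable lborel {0..} (\<lambda>x. survival M X x powr (\<alpha> + \<beta> * \<theta>))"
  shows "(\<exists>k::real. \<forall>t>0. R_ph \<alpha> \<beta> \<theta> (survival M X) t = k * mean_residual_life M X t)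
     \<longleftrightarrow> (\<exists>a b. a > 0 \<and> b > -1 \<and> (\<forall>x>0. survival M X x = gen_pareto_surv a b x))"
proof -
  interpret srv M X by (rule srv.intro[OF assms(1-5)])
  have c0: "0 < \<alpha> + \<beta> * \<theta>" using assms(6-8) by (simp add: add_pos_pos)
  show ?thesis
  proof
    assume "\<exists>k::real. \<forall>t>0. R_ph \<alpha> \<beta> \<theta> (survival M X) t = k * mean_residual_life M X t"
    then obtain k where "\<forall>t>0. R_ph \<alpha> \<beta> \<theta> (survival M X) t = k * mean_residual_life M X t" by blast
    then have rel: "\<forall>t>0. (LBINT x:{t..}. (u x / u t) powr (\<alpha> + \<beta> * \<theta>)) = k * mean_residual_life M X t"
      unfolding R_ph_def .
    show "\<exists>a b. a > 0 \<and> b > -1 \<and> (\<forall>x>0. survival M X x = gen_pareto_surv a b x)"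
      by (rule forward[OF c0 assms(9) assms(10) rel])
  next
    assume "\<exists>a b. a > 0 \<and> b > -1 \<and> (\<forall>x>0. survival M X x = gen_pareto_surv a b x)"
    then obtain a b where a: "a > 0" and b: "b > -1" and gp: "\<forall>x>0. u x = gen_pareto_surv a b x" by blast
    from backward[OF c0 assms(10) a b gp] show "\<exists>k::real. \<forall>t>0. R_ph \<alpha> \<beta> \<theta> (survival M X) t = k * mean_residual_life M X t"
      unfolding R_ph_def .
  qed
qed

end
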